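(* Let $n>1$ be an odd integer and let $M$ be either $(n+1)/2$ or $n-1$. Then \[ \sum_{k=0}^{M}[4k-1]\frac{(aq^{-1},q^{-1}/a,q^{-1}/b,cq^{-1},dq^{-1},q^{-1};q^2)_k}{(q^2/a,aq^2,bq^2,q^2/c,q^2/d,q^2;q^2)_k}\bigg(\frac{bq^7}{cd}\bigg)^k \equiv0\pmod{[n]}. \]
   Context: Here $q,a,b,c,d$ are indeterminates. The $q$-shifted factorial is $(x;q)_0=1$, $(x;q)_k=(1-x)(1-xq)\cdots(1-xq^{k-1})$ for $k\ge1$, and $(x_1,\dots,x_m;q)_k=(x_1;q)_k\cdots(x_m;q)_k$. The $q$-integer is $[m]=(1-q^m)/(1-q)$, which equals the product of the cyclotomic polynomials $\Phi_t(q)$ over divisors $t>1$ of $m$. A congruence $A\equiv B$ modulo a polynomial $P$ between rational functions means that $A-B$ is a rational function whose numerator is divisible by $P$ and whose denominator is coprime to $P$. *)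

theory Defs
  imports "HOL-Computational_Algebra.Polynomial_Factorial"
begin

text \<open>The polynomial ring Z[q,d,c,b,a] in five indeterminates, realised as iterated
  univariate polynomial rings (q outermost), and its fraction field Q(q,a,b,c,d).\<close>

type_synonym mpoly5 = "int poly poly poly poly poly"
type_synonym ratfun5 = "mpoly5 fract"

definition qX :: mpoly5 where "qX = [:0, 1:]"
definition dX :: mpoly5 where "dX = [:[:0, 1:]:]"
definition cX :: mpoly5 where "cX = [:[:[:0, 1:]:]:]"
definition bX :: mpoly5 where "bX = [:[:[:[:0, 1:]:]:]:]"
definition aX :: mpoly5 where "aX = [:[:[:[:[:0, 1:]:]:]:]:]"

definition qv :: ratfun5 where "qv = to_fract qX"
definition av :: ratfun5 where "av = to_fract aX"
definition bv :: ratfun5 where "bv = to_fract bX"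
definition cv :: ratfun5 where "cv = to_fract cX"
definition dv :: ratfun5 where "dv = to_fract dX"

definition qpoch :: "'a::field \<Rightarrow> 'a \<Rightarrow> nat \<Rightarrow> 'a" where
  "qpoch x p k = (\<Prod>j<k. 1 - x * p ^ j)"

definition qint :: "int \<Rightarrow> ratfun5" where
  "qint m = (1 - qv powi m) / (1 - qv)"

definition qintP :: "nat \<Rightarrow> mpoly5" where
  "qintP n = (\<Sum>i<n. qX ^ i)"

definition qcong :: "ratfun5 \<Rightarrow> ratfun5 \<Rightarrow> mpoly5 \<Rightarrow> bool" where
  "qcong A B P \<longleftrightarrow> (\<exists>N D. D \<noteq> 0 \<and> A - B = Fract N D \<and> P dvd N \<and> coprime D P)"

end

theory Submission
  imports Defs
begin

lemma qX_monom: "qX = monom 1 1"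
  by (simp add: qX_def monom_altdef)

lemma coeff_qX_pow0: "coeff (qX ^ i) 0 = (if i = 0 then 1 else 0)"
  by (simp add: qX_monom monom_power coeff_monom)

lemma coeff_qintP0: "n \<ge> 1 \<Longrightarrow> coeff (qintP n) 0 = 1"
  unfolding qintP_def coeff_sum coeff_qX_pow0
  by (simp add: sum.delta' )

lemma qintP_eq: "(1 - qX) * qintP n = 1 - qX ^ n"
  by (simp add: qintP_def one_diff_power_eq)

locale L =
  fixes p :: mpoly5 and n :: nat
  assumes prime: "prime p" and pdvd: "p dvd qintP n" and n1: "n > 1" and nodd: "odd n"
begin

lemma p_nonunit: "\<not> is_unit p" using prime by (simp add: prime_def prime_elem_def)

lemma p_dvd_1qn: "p dvd 1 - qX ^ n"
  using pdvd qintP_eq[of n] by (metis dvd_mult)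

lemma not_dvd_const:
  assumes "w \<noteq> 0" shows "\<not> p dvd [:w:]"
proof
  assume "p dvd [:w:]"
  then obtain h where h: "[:w:] = p * h" by (auto elim: dvdE)
  have "p \<noteq> 0" "h \<noteq> 0" using h assms by auto
  have "degree (p * h) = 0" using h[symmetric] by simp
  hence "degree p + degree h = 0" using degree_mult_eq[of p h] \<open>p \<noteq> 0\<close> \<open>h \<noteq> 0\<close> by simp
  hence "degree p = 0" by simp
  then obtain c where pc: "p = [:c:]" by (metis degree_eq_zeroE)
  obtain g where g: "qintP n = p * g" using pdvd by (auto elim: dvdE)
  have "coeff (qintP n) 0 = c * coeff g 0" using g pc by simp
  hence "c * coeff g 0 = 1" using coeff_qintP0 n1 by simp
  hence "is_unit c" by (metis dvd_triv_left)
  hence "is_unit p" using pc by (metis is_unit_triv one_neq_zero is_unit_poly_iff degree_pCons_0)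
  thus False using p_nonunit by simp
qed

lemma not_dvd_nat: "k \<noteq> 0 \<Longrightarrow> \<not> p dvd of_nat k"
  using not_dvd_const[of "of_nat k"] by (simp add: of_nat_poly)

lemma qintP_split: "qintP n = 1 + qX * (\<Sum>i<n-1. qX ^ i)"
proof -
  have "qintP n = (\<Sum>i<Suc (n-1). qX ^ i)" using n1 by (simp add: qintP_def)
  also have "\<dots> = 1 + qX * (\<Sum>i<n-1. qX ^ i)"
    by (subst sum.lessThan_Suc_shift) (simp add: sum_distrib_left)
  finally show ?thesis .
qed

lemma not_dvd_q: "\<not> p dvd qX"
proof
  assume "p dvd qX"
  hence "p dvd qX * (\<Sum>i<n-1. qX ^ i)" by simp
  moreover have "p dvd 1 + qX * (\<Sum>i<n-1. qX ^ i)" using pdvd qintP_split by simp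
  ultimately have "p dvd 1" by (metis add_diff_cancel_right' dvd_diff)
  thus False using p_nonunit by simp
qed

lemma not_dvd_qpow: "\<not> p dvd qX ^ k"
  using not_dvd_q prime prime_dvd_power by blast

definition t :: nat where "t = (LEAST t. 0 < t \<and> p dvd 1 - qX ^ t)"

lemma t_ex: "0 < t \<and> p dvd 1 - qX ^ t"
  unfolding t_def by (rule LeastI[of _ n]) (use n1 p_dvd_1qn in auto)

lemma t_pos: "0 < t" and t_dvd: "p dvd 1 - qX ^ t" using t_ex by auto

lemma one_minus_pow_mult: "(1 - (x::'a::comm_ring_1) ^ a) dvd (1 - x ^ (a * b))"
proof -
  have "1 - x ^ (a*b) = 1 - (x^a)^b" by (simp add: power_mult)
  also have "\<dots> = (1 - x^a) * (\<Sum>i<b. (x^a)^i)" by (rule one_diff_power_eq)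
  finally show ?thesis by simp
qed

lemma dvd_iff_t: "p dvd 1 - qX ^ m \<longleftrightarrow> t dvd m"
proof
  assume "t dvd m"
  then obtain u where "m = t * u" by auto
  thus "p dvd 1 - qX ^ m" using t_dvd one_minus_pow_mult[of qX t u] dvd_trans by blast
next
  assume h: "p dvd 1 - qX ^ m"
  define u r where "u = m div t" and "r = m mod t"
  have m: "m = t * u + r" unfolding u_def r_def by simp
  have "1 - qX ^ m = (1 - qX ^ (t*u)) + qX ^ (t*u) * (1 - qX ^ r)"
    unfolding m by (simp add: power_add algebra_simps)
  moreover have "p dvd 1 - qX ^ (t*u)" using t_dvd one_minus_pow_mult[of qX t u] dvd_trans by blast
  ultimately have "p dvd qX ^ (t*u) * (1 - qX ^ r)" using h by (metis add_diff_cancel_left' dvd_diff)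
  hence hr: "p dvd 1 - qX ^ r" using prime not_dvd_qpow prime_dvd_mult_iff by blast
  have "r < t" unfolding r_def using t_pos by simp
  have "r = 0"
  proof (rule ccontr)
    assume "r \<noteq> 0"
    hence "0 < r \<and> p dvd 1 - qX ^ r" using hr by simp
    hence "t \<le> r" unfolding t_def by (rule Least_le)
    thus False using \<open>r < t\<close> by simp
  qed
  thus "t dvd m" unfolding r_def by (simp add: dvd_eq_mod_eq_0)
qed

lemma t_dvd_n: "t dvd n" using dvd_iff_t p_dvd_1qn by simp

lemma t_odd: "odd t" using t_dvd_n nodd by (meson dvd_trans even_two_times_div_two dvd_triv_left)

lemma t_ne1: "t \<noteq> 1"
proof
  assume "t = 1"
  hence d: "\<And>i. p dvd 1 - qX ^ i" using dvd_iff_t by simp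
  have "qintP n = of_nat n - (\<Sum>i<n. 1 - qX ^ i)"
    by (simp add: qintP_def sum_subtractf)
  hence "of_nat n = qintP n + (\<Sum>i<n. 1 - qX ^ i)" by simp
  hence "p dvd of_nat n" using pdvd d by (simp add: dvd_sum)
  thus False using not_dvd_nat n1 by simp
qed

lemma t_ge3: "3 \<le> t" using t_pos t_ne1 t_odd by presburger

lemma squarefree: "\<not> p * p dvd qintP n"
proof
  assume "p * p dvd qintP n"
  hence "p * p dvd 1 - qX ^ n" using qintP_eq[of n] by (metis dvd_mult)
  then obtain g where g: "1 - qX ^ n = p * p * g" by (auto elim: dvdE)
  have "pderiv (1 - qX ^ n) = p * (2 * pderiv p * g + p * pderiv g)"
    unfolding g by (simp add: pderiv_mult algebra_simps)
  hence "p dvd pderiv (1 - qX ^ n)" by simp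
  moreover have "pderiv (1 - qX ^ n) = - ([:of_nat n:] * qX ^ (n - 1))"
    by (simp add: pderiv_diff pderiv_power qX_def pderiv_pCons pderiv_1)
  ultimately have "p dvd [:of_nat n:] * qX ^ (n - 1)" by simp
  hence "p dvd [:of_nat n:] \<or> p dvd qX ^ (n-1)" using prime prime_dvd_mult_iff by blast
  thus False using not_dvd_qpow not_dvd_const[of "of_nat n"] n1 by simp
qed

end

context L begin

definition Lp :: "ratfun5 \<Rightarrow> bool" where "Lp x \<longleftrightarrow> (\<exists>a b. \<not> p dvd b \<and> x = Fract a b)"
definition Zp :: "ratfun5 \<Rightarrow> bool" where "Zp x \<longleftrightarrow> (\<exists>a b. \<not> p dvd b \<and> p dvd a \<and> x = Fract a b)"
definition cg :: "ratfun5 \<Rightarrow> ratfun5 \<Rightarrow> bool" where "cg x y \<longleftrightarrow> Zp (x - y)"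

lemma nd_nz: "\<not> p dvd b \<Longrightarrow> b \<noteq> 0" by auto

lemma nd_mult: "\<not> p dvd b \<Longrightarrow> \<not> p dvd d \<Longrightarrow> \<not> p dvd b * d"
  using prime prime_dvd_mult_iff by blast

lemma LpE: assumes "Lp x" obtains a b where "\<not> p dvd b" "b \<noteq> 0" "x = Fract a b"
  using assms unfolding Lp_def by auto
lemma ZpE: assumes "Zp x" obtains a b where "\<not> p dvd b" "b \<noteq> 0" "p dvd a" "x = Fract a b"
  using assms unfolding Zp_def by auto
lemma LpI: "\<not> p dvd b \<Longrightarrow> x = Fract a b \<Longrightarrow> Lp x" unfolding Lp_def by auto
lemma ZpI: "\<not> p dvd b \<Longrightarrow> p dvd a \<Longrightarrow> x = Fract a b \<Longrightarrow> Zp x" unfolding Zp_def by auto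

lemma Lp_add: "Lp x \<Longrightarrow> Lp y \<Longrightarrow> Lp (x + y)"
proof -
  assume "Lp x" "Lp y"
  obtain a b where "\<not> p dvd b" "b \<noteq> 0" "x = Fract a b" using \<open>Lp x\<close> by (rule LpE)
  moreover obtain c d where "\<not> p dvd d" "d \<noteq> 0" "y = Fract c d" using \<open>Lp y\<close> by (rule LpE)
  ultimately show ?thesis by (intro LpI[of "b*d" _ "a*d+c*b"]) (simp_all add: nd_mult)
qed

lemma Lp_mult: "Lp x \<Longrightarrow> Lp y \<Longrightarrow> Lp (x * y)"
proof -
  assume "Lp x" "Lp y"
  obtain a b where "\<not> p dvd b" "b \<noteq> 0" "x = Fract a b" using \<open>Lp x\<close> by (rule LpE)
  moreover obtain c d where "\<not> p dvd d" "d \<noteq> 0" "y = Fract c d" using \<open>Lp y\<close> by (rule LpE)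
  ultimately show ?thesis by (intro LpI[of "b*d" _ "a*c"]) (simp_all add: nd_mult)
qed

lemma Lp_uminus: "Lp x \<Longrightarrow> Lp (- x)"
proof -
  assume "Lp x"
  then obtain a b where "\<not> p dvd b" "b \<noteq> 0" "x = Fract a b" by (rule LpE)
  thus ?thesis by (intro LpI[of "b" _ "-a"]) simp_all
qed

lemma Lp_diff: "Lp x \<Longrightarrow> Lp y \<Longrightarrow> Lp (x - y)"
  using Lp_add Lp_uminus by (metis diff_conv_add_uminus)

lemma Lp_to_fract: "Lp (to_fract r)"
  unfolding Lp_def to_fract_def using p_nonunit by auto

lemma Lp_0: "Lp 0" and Lp_1: "Lp 1" using Lp_to_fract[of 0] Lp_to_fract[of 1] by auto

lemma Lp_of_nat: "Lp (of_nat k)" using Lp_to_fract[of "of_nat k"] by (simp add: of_nat_fract to_fract_def)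

lemma Lp_power: "Lp x \<Longrightarrow> Lp (x ^ k)" by (induct k) (auto intro: Lp_mult Lp_1)

lemma Lp_sum: "(\<And>i. i \<in> I \<Longrightarrow> Lp (f i)) \<Longrightarrow> Lp (sum f I)"
  by (induct I rule: infinite_finite_induct) (auto intro: Lp_add Lp_0)

lemma Lp_prod: "(\<And>i. i \<in> I \<Longrightarrow> Lp (f i)) \<Longrightarrow> Lp (prod f I)"
  by (induct I rule: infinite_finite_induct) (auto intro: Lp_mult Lp_1)

lemma Zp_Lp: "Zp x \<Longrightarrow> Lp x" unfolding Zp_def Lp_def by auto

lemma Zp_add: "Zp x \<Longrightarrow> Zp y \<Longrightarrow> Zp (x + y)"
proof -
  assume "Zp x" "Zp y"
  obtain a b where "\<not> p dvd b" "b \<noteq> 0" "p dvd a" "x = Fract a b" using \<open>Zp x\<close> by (rule ZpE)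
  moreover obtain c d where "\<not> p dvd d" "d \<noteq> 0" "p dvd c" "y = Fract c d" using \<open>Zp y\<close> by (rule ZpE)
  ultimately show ?thesis by (intro ZpI[of "b*d" "a*d+c*b"]) (simp_all add: nd_mult)
qed

lemma Zp_mult: "Lp x \<Longrightarrow> Zp y \<Longrightarrow> Zp (x * y)"
proof -
  assume "Lp x" "Zp y"
  obtain a b where "\<not> p dvd b" "b \<noteq> 0" "x = Fract a b" using \<open>Lp x\<close> by (rule LpE)
  moreover obtain c d where "\<not> p dvd d" "d \<noteq> 0" "p dvd c" "y = Fract c d" using \<open>Zp y\<close> by (rule ZpE)
  ultimately show ?thesis by (intro ZpI[of "b*d" "a*c"]) (simp_all add: nd_mult)
qed

lemma Zp_mult': "Zp x \<Longrightarrow> Lp y \<Longrightarrow> Zp (x * y)"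
  using Zp_mult by (metis mult.commute)

lemma Zp_uminus: "Zp x \<Longrightarrow> Zp (- x)"
proof -
  assume "Zp x"
  then obtain a b where "\<not> p dvd b" "b \<noteq> 0" "p dvd a" "x = Fract a b" by (rule ZpE)
  thus ?thesis by (intro ZpI[of "b" "-a"]) simp_all
qed

lemma Zp_diff: "Zp x \<Longrightarrow> Zp y \<Longrightarrow> Zp (x - y)"
  using Zp_add Zp_uminus by (metis diff_conv_add_uminus)

lemma Zp_0: "Zp 0" using p_nonunit by (intro ZpI[of 1 0]) (simp_all add: fract_collapse)

lemma Zp_sum: "(\<And>i. i \<in> I \<Longrightarrow> Zp (f i)) \<Longrightarrow> Zp (sum f I)"
  by (induct I rule: infinite_finite_induct) (auto intro: Zp_add Zp_0)

lemma Zp_to_fract: "Zp (to_fract r) \<longleftrightarrow> p dvd r"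
proof
  assume "Zp (to_fract r)"
  then obtain a b where ab: "\<not> p dvd b" "p dvd a" "to_fract r = Fract a b" unfolding Zp_def by auto
  hence "r * b = a * 1" unfolding to_fract_def by (simp add: eq_fract nd_nz)
  hence "p dvd r * b" using ab by simp
  thus "p dvd r" using ab prime prime_dvd_mult_iff by blast
next
  assume "p dvd r" thus "Zp (to_fract r)" unfolding Zp_def to_fract_def using p_nonunit by auto
qed

lemma not_Zp_1: "\<not> Zp 1" using Zp_to_fract[of 1] p_nonunit by simp

lemma Zp_mult_cases: "Lp x \<Longrightarrow> Lp y \<Longrightarrow> Zp (x * y) \<Longrightarrow> Zp x \<or> Zp y"
proof -
  assume "Lp x" "Lp y" "Zp (x * y)"
  then obtain a b c d e f where ab: "\<not> p dvd b" "x = Fract a b" and cd: "\<not> p dvd d" "y = Fract c d"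
    and ef: "\<not> p dvd f" "p dvd e" "x * y = Fract e f" unfolding Lp_def Zp_def by blast
  have "Fract (a * c) (b * d) = Fract e f" using ab cd ef by simp
  hence "a * c * f = e * (b * d)" using ab cd ef by (simp add: eq_fract nd_nz)
  hence "p dvd a * c * f" using ef by simp
  hence "p dvd a \<or> p dvd c" using ef prime prime_dvd_mult_iff by blast
  thus "Zp x \<or> Zp y" using ab cd unfolding Zp_def by blast
qed

lemma Lp_inverse: "Lp x \<Longrightarrow> \<not> Zp x \<Longrightarrow> Lp (inverse x)"
proof -
  assume "Lp x" "\<not> Zp x"
  then obtain a b where ab: "\<not> p dvd b" "x = Fract a b" unfolding Lp_def by blast
  hence "\<not> p dvd a" using \<open>\<not> Zp x\<close> unfolding Zp_def by blast
  thus "Lp (inverse x)" using ab unfolding Lp_def by auto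
qed

lemma x_inv: "\<not> Zp x \<Longrightarrow> x * inverse x = 1"
  using Zp_0 by (metis right_inverse)

lemma not_Zp_inverse: "Lp x \<Longrightarrow> \<not> Zp x \<Longrightarrow> \<not> Zp (inverse x)"
  using Zp_mult[of x "inverse x"] x_inv not_Zp_1 by auto

lemma Up_mult: "Lp x \<Longrightarrow> \<not> Zp x \<Longrightarrow> Lp y \<Longrightarrow> \<not> Zp y \<Longrightarrow> \<not> Zp (x * y)"
  using Zp_mult_cases by blast

lemma Zp_cancel: "Zp (x * u) \<Longrightarrow> Lp x \<Longrightarrow> Lp u \<Longrightarrow> \<not> Zp u \<Longrightarrow> Zp x"
  using Zp_mult_cases by blast

lemma Zp_prod: "finite I \<Longrightarrow> i0 \<in> I \<Longrightarrow> Zp (f i0) \<Longrightarrow> (\<And>i. i \<in> I \<Longrightarrow> Lp (f i)) \<Longrightarrow> Zp (prod f I)"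
proof -
  assume "finite I" "i0 \<in> I" "Zp (f i0)" "\<And>i. i \<in> I \<Longrightarrow> Lp (f i)"
  hence "prod f I = f i0 * prod f (I - {i0})" by (simp add: prod.remove)
  moreover have "Lp (prod f (I - {i0}))" by (rule Lp_prod) (use \<open>\<And>i. i \<in> I \<Longrightarrow> Lp (f i)\<close> in auto)
  ultimately show ?thesis using Zp_mult' \<open>Zp (f i0)\<close> by simp
qed

lemma not_Zp_prod: "(\<And>i. i \<in> I \<Longrightarrow> Lp (f i) \<and> \<not> Zp (f i)) \<Longrightarrow> \<not> Zp (prod f I)"
  by (induct I rule: infinite_finite_induct) (auto simp: not_Zp_1 intro: Lp_prod dest: Zp_mult_cases)

lemma not_Zp_power: "Lp x \<Longrightarrow> \<not> Zp x \<Longrightarrow> \<not> Zp (x ^ k)"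
  by (induct k) (auto simp: not_Zp_1 intro: Lp_power dest: Zp_mult_cases)

lemma cg_refl: "cg x x" unfolding cg_def using Zp_0 by simp
lemma cg_sym: "cg x y \<Longrightarrow> cg y x" unfolding cg_def using Zp_uminus by fastforce
lemma cg_trans: "cg x y \<Longrightarrow> cg y z \<Longrightarrow> cg x z" unfolding cg_def using Zp_add by fastforce
lemma cg_add: "cg x y \<Longrightarrow> cg x' y' \<Longrightarrow> cg (x + x') (y + y')"
  unfolding cg_def using Zp_add by (metis add_diff_add)
lemma cg_diff: "cg x y \<Longrightarrow> cg x' y' \<Longrightarrow> cg (x - x') (y - y')"
proof -
  assume "cg x y" "cg x' y'"
  hence "Zp ((x - y) - (x' - y'))" unfolding cg_def using Zp_diff by simp
  moreover have "(x - x') - (y - y') = (x - y) - (x' - y')" by simp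
  ultimately show ?thesis unfolding cg_def by metis
qed
lemma cg_uminus: "cg x y \<Longrightarrow> cg (- x) (- y)"
  unfolding cg_def using Zp_uminus by (metis minus_diff_minus)
lemma cg_Lp: "cg x y \<Longrightarrow> Lp x \<Longrightarrow> Lp y"
proof -
  assume "cg x y" "Lp x"
  have "y = x - (x - y)" by simp
  thus ?thesis using Lp_diff[OF \<open>Lp x\<close> Zp_Lp[of "x - y"]] \<open>cg x y\<close> unfolding cg_def by simp
qed
lemma cg_Zp: "cg x y \<Longrightarrow> Zp x \<Longrightarrow> Zp y"
proof -
  assume "cg x y" "Zp x"
  have "y = x - (x - y)" by simp
  thus ?thesis using Zp_diff[OF \<open>Zp x\<close>, of "x - y"] \<open>cg x y\<close> unfolding cg_def by simp
qed
lemma cg_mult: "cg x y \<Longrightarrow> cg x' y' \<Longrightarrow> Lp x \<Longrightarrow> Lp y' \<Longrightarrow> cg (x * x') (y * y')"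
proof -
  assume a: "cg x y" "cg x' y'" "Lp x" "Lp y'"
  have "x * x' - y * y' = x * (x' - y') + (x - y) * y'" by (simp add: algebra_simps)
  thus ?thesis using a unfolding cg_def by (metis Zp_add Zp_mult Zp_mult')
qed
lemma cg_mult_Lp: "cg x y \<Longrightarrow> cg x' y' \<Longrightarrow> Lp x \<Longrightarrow> Lp x' \<Longrightarrow> cg (x * x') (y * y')"
  using cg_mult cg_Lp by blast
lemma cg_multL: "cg x y \<Longrightarrow> Lp c \<Longrightarrow> cg (c * x) (c * y)"
  unfolding cg_def using Zp_mult by (metis right_diff_distrib)
lemma cg_power: "cg x y \<Longrightarrow> Lp x \<Longrightarrow> cg (x ^ k) (y ^ k)"
  by (induct k) (auto intro: cg_refl cg_mult_Lp Lp_power)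
lemma cg_inverse: "cg x y \<Longrightarrow> Lp x \<Longrightarrow> \<not> Zp x \<Longrightarrow> cg (inverse x) (inverse y)"
proof -
  assume a: "cg x y" "Lp x" "\<not> Zp x"
  have y: "Lp y" "\<not> Zp y" using a cg_Lp cg_Zp cg_sym by blast+
  have "x \<noteq> 0" "y \<noteq> 0" using a(3) y(2) Zp_0 by auto
  hence "inverse x - inverse y = (y - x) * inverse x * inverse y"
    by (simp add: field_simps)
  moreover have "Zp (y - x)" using a(1) cg_sym unfolding cg_def by blast
  ultimately show ?thesis unfolding cg_def using Lp_inverse a y by (metis Zp_mult')
qed
lemma cg_divide: "cg x y \<Longrightarrow> cg u v \<Longrightarrow> Lp x \<Longrightarrow> Lp u \<Longrightarrow> \<not> Zp u \<Longrightarrow> cg (x / u) (y / v)"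
  unfolding divide_inverse using cg_inverse cg_mult_Lp Lp_inverse by blast
lemma cg_cancel: "cg (x * u) (y * u) \<Longrightarrow> Lp x \<Longrightarrow> Lp y \<Longrightarrow> Lp u \<Longrightarrow> \<not> Zp u \<Longrightarrow> cg x y"
  unfolding cg_def by (metis left_diff_distrib Zp_cancel Lp_diff)
lemma cg_sum: "(\<And>i. i \<in> I \<Longrightarrow> cg (f i) (g i)) \<Longrightarrow> cg (sum f I) (sum g I)"
  by (induct I rule: infinite_finite_induct) (auto intro: cg_add cg_refl)
lemma cg_prod: "(\<And>i. i \<in> I \<Longrightarrow> cg (f i) (g i) \<and> Lp (f i)) \<Longrightarrow> cg (prod f I) (prod g I)"
  by (induct I rule: infinite_finite_induct) (auto intro: cg_mult_Lp cg_refl Lp_prod)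
lemma Zp_cg0: "Zp x \<longleftrightarrow> cg x 0" unfolding cg_def by simp

end

lemma not_unit_const: "\<not> is_unit (w::'a::idom_divide poly) \<Longrightarrow> \<not> is_unit [:w:]"
  by (simp add: is_unit_poly_iff)

lemma not_unit_x: "\<not> is_unit ([:0, 1:] :: 'a::idom_divide poly)"
  by (simp add: is_unit_poly_iff)

lemma to_fract_power: "to_fract (x ^ k) = to_fract x ^ k"
  by (induct k) simp_all

lemma pow_ne_1: "\<not> is_unit (w::'a::algebraic_semidom) \<Longrightarrow> k > 0 \<Longrightarrow> w ^ k \<noteq> 1"
  by (metis dvd_power dvd_triv_left is_unit_power_iff power_0 )

definition phi :: "ratfun5 \<Rightarrow> int \<Rightarrow> ratfun5" where "phi X m = 1 - X * qv powi m"

context L begin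

lemma qv_fract: "qv = to_fract qX" by (simp add: qv_def)

lemma Lp_qv: "Lp qv" and nZ_qv: "\<not> Zp qv"
  using Lp_to_fract[of qX] Zp_to_fract[of qX] not_dvd_q by (auto simp: qv_def)

lemma qv_nz: "qv \<noteq> 0" using nZ_qv Zp_0 by auto

lemma Lp_qpowi: "Lp (qv powi m)" and nZ_qpowi: "\<not> Zp (qv powi m)"
proof -
  have "Lp (qv powi m) \<and> \<not> Zp (qv powi m)"
  proof (cases "0 \<le> m")
    case True thus ?thesis using Lp_power[OF Lp_qv] not_Zp_power[OF Lp_qv nZ_qv] by (simp add: power_int_def)
  next
    case False
    have "Lp (inverse qv)" "\<not> Zp (inverse qv)" using Lp_inverse not_Zp_inverse Lp_qv nZ_qv by auto
    thus ?thesis using False Lp_power not_Zp_power by (simp add: power_int_def)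
  qed
  thus "Lp (qv powi m)" "\<not> Zp (qv powi m)" by auto
qed

lemma Lp_qpow: "Lp (qv ^ k)" using Lp_qpowi[of "int k"] by simp
lemma nZ_qpow: "\<not> Zp (qv ^ k)" using nZ_qpowi[of "int k"] by simp

lemma Zp_1_qpow_nat: "Zp (1 - qv ^ k) \<longleftrightarrow> t dvd k"
proof -
  have e: "1 - qv ^ k = to_fract (1 - qX ^ k)" by (simp add: qv_def to_fract_power)
  show ?thesis unfolding e by (simp only: Zp_to_fract dvd_iff_t)
qed

lemma Zp_1_qpowi: "Zp (1 - qv powi m) \<longleftrightarrow> int t dvd m"
proof (cases "0 \<le> m")
  case True
  then obtain k where "m = int k" by (metis nonneg_eq_int)
  thus ?thesis using Zp_1_qpow_nat[of k] by simp
next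
  case False
  obtain k where k: "m = - int k" using False by (intro that[of "nat (-m)"]) simp
  have e: "1 - qv powi m = (1 - qv ^ k) * (- (qv powi m))"
    using qv_nz by (simp add: k power_int_minus field_simps)
  have "Lp (- (qv powi m))" using Lp_qpowi Lp_uminus by blast
  moreover have "\<not> Zp (- (qv powi m))" using nZ_qpowi[of m] Zp_uminus[of "- (qv powi m)"] by auto
  moreover have "Lp (1 - qv ^ k)" using Lp_diff Lp_1 Lp_qpow by auto
  ultimately have "Zp (1 - qv powi m) \<longleftrightarrow> Zp (1 - qv ^ k)" unfolding e using Zp_cancel Zp_mult' by blast
  thus ?thesis using Zp_1_qpow_nat[of k] k by simp
qed

lemma cg_qpowi: "int t dvd (m - m') \<Longrightarrow> cg (qv powi m) (qv powi m')"
proof -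
  assume "int t dvd (m - m')"
  hence "Zp (1 - qv powi (m - m'))" using Zp_1_qpowi by simp
  hence "Zp ((1 - qv powi (m - m')) * (- (qv powi m')))" using Zp_mult' Lp_uminus Lp_qpowi by blast
  moreover have "(1 - qv powi (m - m')) * (- (qv powi m')) = qv powi m - qv powi m'"
    using qv_nz by (simp add: power_int_diff field_simps)
  ultimately show ?thesis unfolding cg_def by simp
qed


lemma Lp_phi: "Lp X \<Longrightarrow> Lp (phi X m)"
  unfolding phi_def using Lp_diff Lp_1 Lp_mult Lp_qpowi by blast

lemma cg_phi: "Lp X \<Longrightarrow> int t dvd (m - m') \<Longrightarrow> cg (phi X m) (phi X m')"
  unfolding phi_def by (intro cg_diff cg_refl cg_multL cg_qpowi)

definition good :: "ratfun5 \<Rightarrow> bool" where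
  "good X \<longleftrightarrow> Lp X \<and> \<not> Zp X \<and> \<not> Zp (X ^ n - 1)"

lemma good_phi: "good X \<Longrightarrow> Lp (phi X m) \<and> \<not> Zp (phi X m)"
proof
  assume g: "good X"
  thus "Lp (phi X m)" using Lp_phi good_def by blast
  show "\<not> Zp (phi X m)"
  proof
    assume "Zp (phi X m)"
    hence "cg (X * qv powi m) 1" unfolding phi_def cg_def using Zp_uminus by fastforce
    hence "cg ((X * qv powi m) ^ n) (1 ^ n)" using cg_power Lp_mult Lp_qpowi g good_def by blast
    hence c1: "cg (X ^ n * qv powi (m * int n)) 1"
      by (simp add: power_mult_distrib power_int_power')
    have "int t dvd (m * int n - 0)" using t_dvd_n by simp
    hence "cg (qv powi (m * int n)) (qv powi 0)" by (rule cg_qpowi)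
    hence "cg (X ^ n * qv powi (m * int n)) (X ^ n * 1)" using cg_multL Lp_power g good_def by fastforce
    hence "cg (X ^ n * 1) 1" using cg_trans[OF cg_sym c1] by blast
    hence "cg (X ^ n) 1" by simp
    thus False using g unfolding good_def cg_def by simp
  qed
qed

lemma good_inverse: "good X \<Longrightarrow> good (inverse X)"
proof -
  assume g: "good X"
  hence X: "Lp X" "\<not> Zp X" "\<not> Zp (X ^ n - 1)" unfolding good_def by auto
  have X0: "X \<noteq> 0" using X Zp_0 by auto
  have i: "Lp (inverse X)" "\<not> Zp (inverse X)" using X Lp_inverse not_Zp_inverse by auto
  have u0: "Lp (inverse (X ^ n))" "\<not> Zp (inverse (X ^ n))"
    using Lp_inverse not_Zp_inverse Lp_power not_Zp_power X by auto
  have u: "Lp (- inverse (X ^ n))" "\<not> Zp (- inverse (X ^ n))"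
    using u0 Lp_uminus Zp_uminus[of "- inverse (X ^ n)"] by auto
  have e: "inverse X ^ n - 1 = (X ^ n - 1) * (- inverse (X ^ n))"
    using X0 by (simp add: field_simps power_inverse)
  have "\<not> Zp (inverse X ^ n - 1)"
    unfolding e using Zp_cancel[of "X ^ n - 1" "- inverse (X ^ n)"] u X Lp_diff Lp_power Lp_1 by blast
  thus ?thesis using i unfolding good_def by simp
qed

lemma good_const:
  fixes w :: "int poly poly poly poly"
  assumes "\<not> is_unit w" "w \<noteq> 0"
  shows "good (to_fract [:w:])"
proof -
  have "w ^ n \<noteq> 1" using pow_ne_1[OF assms(1), of n] n1 by simp
  hence "\<not> p dvd [:w ^ n - 1:]" using not_dvd_const by simp
  moreover have "to_fract [:w:] ^ n - 1 = to_fract [:w ^ n - 1:]"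
  proof -
    have h: "[:w ^ n - 1:] = ([:w ^ n:] :: mpoly5) - 1" by (simp add: one_pCons)
    show ?thesis unfolding h by (simp add: to_fract_power[symmetric] poly_const_pow)
  qed
  ultimately show ?thesis unfolding good_def using Lp_to_fract Zp_to_fract not_dvd_const assms by simp
qed

lemma good_av: "good av" and good_bv: "good bv" and good_cv: "good cv" and good_dv: "good dv"
  unfolding av_def aX_def bv_def bX_def cv_def cX_def dv_def dX_def
  by (rule good_const; simp add: not_unit_const not_unit_x)+

end

lemma qX_nz: "qX \<noteq> 0" and aX_nz: "aX \<noteq> 0" and bX_nz: "bX \<noteq> 0" and cX_nz: "cX \<noteq> 0" and dX_nz: "dX \<noteq> 0"
  by (simp_all add: qX_def aX_def bX_def cX_def dX_def)

lemma qv_nz': "qv \<noteq> 0" and av_nz: "av \<noteq> 0" and bv_nz: "bv \<noteq> 0" and cv_nz: "cv \<noteq> 0" and dv_nz: "dv \<noteq> 0"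
  by (simp_all add: qv_def av_def bv_def cv_def dv_def qX_nz aX_nz bX_nz cX_nz dX_nz)

definition zz :: ratfun5 where "zz = bv * qv ^ 7 / (cv * dv)"
definition ws :: "ratfun5 list" where "ws = [av, inverse av, inverse bv, cv, dv, 1]"
definition FF :: "nat \<Rightarrow> ratfun5 \<Rightarrow> ratfun5" where
  "FF i X = phi X (2 * int i - 1) / phi (inverse X) (2 * int i + 2)"
definition rho :: "nat \<Rightarrow> ratfun5" where "rho i = zz * prod_list (map (FF i) ws)"
definition hh :: "nat \<Rightarrow> ratfun5" where "hh k = (\<Prod>i<k. rho i)"
definition cc :: "nat \<Rightarrow> ratfun5" where "cc k = qint (4 * int k - 1) * hh k"

lemma qpowi_m1: "qv powi (2 * int j - 1) = (qv ^ 2) ^ j / qv"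
proof -
  have "qv powi (2 * int j - 1) = qv powi (int (2 * j)) / qv powi 1"
    using qv_nz' by (subst power_int_diff[symmetric]) auto
  moreover have "qv powi (int (2 * j)) = qv ^ (2 * j)" by (rule power_int_of_nat)
  ultimately show ?thesis by (simp add: power_mult)
qed

lemma qpowi_p2: "qv powi (2 * int j + 2) = qv ^ 2 * (qv ^ 2) ^ j"
proof -
  have i: "int (2 * j + 2) = 2 * int j + 2" by simp
  have "qv powi (2 * int j + 2) = qv powi (int (2 * j + 2))" unfolding i ..
  also have "\<dots> = qv ^ (2 * j + 2)" by (rule power_int_of_nat)
  also have "\<dots> = qv ^ 2 * (qv ^ 2) ^ j" by (metis power_add power_mult mult.commute)
  finally show ?thesis .
qed

lemma qpoch_phi1: "qpoch (Y / qv) (qv^2) k = (\<Prod>j<k. phi Y (2 * int j - 1))"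
  unfolding qpoch_def phi_def qpowi_m1 by simp

lemma qpoch_phi2: "qpoch (Y * qv^2) (qv^2) k = (\<Prod>j<k. phi Y (2 * int j + 2))"
  unfolding qpoch_def phi_def qpowi_p2 by (simp add: mult.assoc)

lemma FF_prod: "prod_list (map (FF j) ws) =
   (phi av (2 * int j - 1) * phi (inverse av) (2 * int j - 1) * phi (inverse bv) (2 * int j - 1) *
    phi cv (2 * int j - 1) * phi dv (2 * int j - 1) * phi 1 (2 * int j - 1)) /
   (phi (inverse av) (2 * int j + 2) * phi av (2 * int j + 2) * phi bv (2 * int j + 2) *
    phi (inverse cv) (2 * int j + 2) * phi (inverse dv) (2 * int j + 2) * phi 1 (2 * int j + 2))"
  by (simp add: ws_def FF_def mult_ac)

lemma summand_eq: "qint (4 * int k - 1) *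
       (qpoch (av / qv) (qv^2) k * qpoch (1 / (qv * av)) (qv^2) k * qpoch (1 / (qv * bv)) (qv^2) k
        * qpoch (cv / qv) (qv^2) k * qpoch (dv / qv) (qv^2) k * qpoch (1 / qv) (qv^2) k)
     / (qpoch (qv^2 / av) (qv^2) k * qpoch (av * qv^2) (qv^2) k * qpoch (bv * qv^2) (qv^2) k
        * qpoch (qv^2 / cv) (qv^2) k * qpoch (qv^2 / dv) (qv^2) k * qpoch (qv^2) (qv^2) k)
     * (bv * qv ^ 7 / (cv * dv)) ^ k = cc k"
proof -
  have e1: "1 / (qv * av) = inverse av / qv" "1 / (qv * bv) = inverse bv / qv"
    "qv^2 / av = inverse av * qv^2" "qv^2 / cv = inverse cv * qv^2" "qv^2 / dv = inverse dv * qv^2"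
    "qv^2 = 1 * qv^2" by (simp_all add: field_simps)
  have e2: "qpoch (qv^2) (qv^2) k = qpoch (1 * qv^2) (qv^2) k" by simp
  have "hh k = (\<Prod>j<k. zz * prod_list (map (FF j) ws))" by (simp add: hh_def rho_def)
  also have "\<dots> = zz ^ k * (\<Prod>j<k. prod_list (map (FF j) ws))" by (simp add: prod.distrib)
  also have "(\<Prod>j<k. prod_list (map (FF j) ws)) = 
    (qpoch (av / qv) (qv^2) k * qpoch (1 / (qv * av)) (qv^2) k * qpoch (1 / (qv * bv)) (qv^2) k
        * qpoch (cv / qv) (qv^2) k * qpoch (dv / qv) (qv^2) k * qpoch (1 / qv) (qv^2) k)
     / (qpoch (qv^2 / av) (qv^2) k * qpoch (av * qv^2) (qv^2) k * qpoch (bv * qv^2) (qv^2) k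
        * qpoch (qv^2 / cv) (qv^2) k * qpoch (qv^2 / dv) (qv^2) k * qpoch (qv^2) (qv^2) k)"
    unfolding e1(1-5) e2 qpoch_phi1 qpoch_phi2 FF_prod
    by (simp add: prod_dividef prod.distrib)
  finally show ?thesis by (simp add: cc_def zz_def mult_ac)
qed


definition vs :: "ratfun5 list" where "vs = [av, inverse av, inverse bv, cv, dv]"
definition uu :: "nat \<Rightarrow> ratfun5" where "uu i = zz * prod_list (map (FF i) vs)"

lemma ws_vs: "ws = vs @ [1]" by (simp add: ws_def vs_def)
lemma rho_uu: "rho i = uu i * FF i 1" by (simp add: rho_def uu_def ws_vs mult.assoc)
lemma FF1: "FF i 1 = phi 1 (2 * int i - 1) / phi 1 (2 * int i + 2)" by (simp add: FF_def)
lemma hh_Suc: "hh (Suc k) = hh k * rho k" by (simp add: hh_def)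
lemma hh_0: "hh 0 = 1" by (simp add: hh_def)

context L begin

lemma Lp_prod_list: "(\<And>X. X \<in> set xs \<Longrightarrow> Lp (f X)) \<Longrightarrow> Lp (prod_list (map f xs))"
  by (induct xs) (auto intro: Lp_mult Lp_1)

lemma nZ_prod_list: "(\<And>X. X \<in> set xs \<Longrightarrow> Lp (f X) \<and> \<not> Zp (f X)) \<Longrightarrow> \<not> Zp (prod_list (map f xs))"
proof (induct xs)
  case Nil thus ?case using not_Zp_1 by simp
next
  case (Cons a xs)
  have "Lp (prod_list (map f xs))" using Cons.prems by (intro Lp_prod_list) auto
  moreover have "\<not> Zp (prod_list (map f xs))" using Cons by auto
  moreover have "Lp (f a)" "\<not> Zp (f a)" using Cons.prems by auto
  ultimately show ?case using Up_mult by simp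
qed

lemma cg_prod_list: "(\<And>X. X \<in> set xs \<Longrightarrow> cg (f X) (g X) \<and> Lp (f X)) \<Longrightarrow>
   cg (prod_list (map f xs)) (prod_list (map g xs))"
  by (induct xs) (auto intro: cg_mult_Lp cg_refl Lp_prod_list)

lemma good_vs: "X \<in> set vs \<Longrightarrow> good X \<and> good (inverse X)"
  using good_av good_bv good_cv good_dv good_inverse by (auto simp: vs_def)

lemma good_Lp: "good X \<Longrightarrow> Lp X" and good_nZ: "good X \<Longrightarrow> \<not> Zp X" by (auto simp: good_def)

lemma phi1_Zp: "Zp (phi 1 m) \<longleftrightarrow> int t dvd m" by (simp add: phi_def Zp_1_qpowi)
lemma Lp_phi1: "Lp (phi 1 m)" using Lp_phi Lp_1 by blast

lemma Lp_zz: "Lp zz" and nZ_zz: "\<not> Zp zz"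
proof -
  have c: "Lp (cv * dv)" "\<not> Zp (cv * dv)" using good_cv good_dv good_Lp good_nZ Lp_mult Up_mult by auto
  have e: "zz = bv * qv ^ 7 * inverse (cv * dv)" by (simp add: zz_def divide_inverse)
  have u: "Lp (bv * qv ^ 7)" "\<not> Zp (bv * qv ^ 7)" using good_bv good_Lp good_nZ Lp_qpow nZ_qpow Lp_mult Up_mult by auto
  show "Lp zz" unfolding e using u c Lp_mult Lp_inverse by blast
  show "\<not> Zp zz" unfolding e using u c Lp_inverse not_Zp_inverse Up_mult by blast
qed

lemma Lp_FF: "Lp (phi X a) \<Longrightarrow> Lp (phi Y b) \<Longrightarrow> \<not> Zp (phi Y b) \<Longrightarrow> Lp (phi X a / phi Y b)"
  unfolding divide_inverse using Lp_mult Lp_inverse by blast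

lemma Up_FF: "Lp (phi X a) \<Longrightarrow> \<not> Zp (phi X a) \<Longrightarrow> Lp (phi Y b) \<Longrightarrow> \<not> Zp (phi Y b) \<Longrightarrow> \<not> Zp (phi X a / phi Y b)"
  unfolding divide_inverse using Up_mult Lp_inverse not_Zp_inverse by blast

lemma Lp_uu: "Lp (uu i)" and nZ_uu: "\<not> Zp (uu i)"
proof -
  have "\<And>X. X \<in> set vs \<Longrightarrow> Lp (FF i X) \<and> \<not> Zp (FF i X)"
  proof -
    fix X assume "X \<in> set vs"
    hence g: "good X" "good (inverse X)" using good_vs by auto
    have a: "Lp (phi X (2 * int i - 1))" "\<not> Zp (phi X (2 * int i - 1))" using good_phi[OF g(1)] by auto
    have b: "Lp (phi (inverse X) (2 * int i + 2))" "\<not> Zp (phi (inverse X) (2 * int i + 2))" using good_phi[OF g(2)] by auto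
    show "Lp (FF i X) \<and> \<not> Zp (FF i X)" unfolding FF_def using Lp_FF[OF a(1) b] Up_FF[OF a b] by simp
  qed
  hence "Lp (prod_list (map (FF i) vs))" "\<not> Zp (prod_list (map (FF i) vs))"
    using Lp_prod_list[of vs "FF i"] nZ_prod_list[of vs "FF i"] by auto
  thus "Lp (uu i)" "\<not> Zp (uu i)" unfolding uu_def using Lp_zz nZ_zz Lp_mult Up_mult by auto
qed

lemma t_dvd_2x: "int t dvd 2 * x \<longleftrightarrow> int t dvd x"
proof -
  have "coprime (int t) 2" using t_odd by (simp add: coprime_commute)
  thus ?thesis by (simp add: coprime_dvd_mult_right_iff)
qed

lemma den_unit: "\<not> t dvd Suc i \<Longrightarrow> \<not> int t dvd (2 * int i + 2)"
proof -
  assume a: "\<not> t dvd Suc i"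
  have "2 * int i + 2 = 2 * int (Suc i)" by simp
  thus ?thesis using t_dvd_2x a by (simp del: of_nat_Suc)
qed

lemma Lp_FF1: "\<not> t dvd Suc i \<Longrightarrow> Lp (FF i 1)"
  unfolding FF1 using Lp_FF Lp_phi1 phi1_Zp den_unit by blast

lemma Lp_rho: "\<not> t dvd Suc i \<Longrightarrow> Lp (rho i)"
  unfolding rho_uu using Lp_FF1 Lp_uu Lp_mult by blast

lemma cg_FF: "Lp X \<Longrightarrow> Lp (inverse X) \<Longrightarrow> \<not> Zp (phi (inverse X) (2 * int i + 2)) \<Longrightarrow>
  int t dvd (a - (2 * int i - 1)) \<Longrightarrow> int t dvd (b - (2 * int i + 2)) \<Longrightarrow>
  cg (phi X a / phi (inverse X) b) (FF i X)"
proof -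
  assume a: "Lp X" "Lp (inverse X)" "\<not> Zp (phi (inverse X) (2 * int i + 2))"
    "int t dvd (a - (2 * int i - 1))" "int t dvd (b - (2 * int i + 2))"
  have c1: "cg (phi X a) (phi X (2 * int i - 1))" using a by (intro cg_phi)
  have c2: "cg (phi (inverse X) b) (phi (inverse X) (2 * int i + 2))" using a by (intro cg_phi)
  have nz: "\<not> Zp (phi (inverse X) b)" using c2 a(3) cg_Zp cg_sym by blast
  show ?thesis unfolding FF_def by (rule cg_divide[OF c1 c2 Lp_phi[OF a(1)] Lp_phi[OF a(2)] nz])
qed

lemma nZ_phi_ws_den: "X \<in> set ws \<Longrightarrow> \<not> int t dvd m \<Longrightarrow> \<not> Zp (phi (inverse X) m)"
  using good_vs good_phi phi1_Zp by (auto simp: ws_vs)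

lemma nZ_phi_ws_num: "X \<in> set ws \<Longrightarrow> \<not> int t dvd m \<Longrightarrow> \<not> Zp (phi X m)"
  using good_vs good_phi phi1_Zp by (auto simp: ws_vs)

lemma Lp_ws: "X \<in> set ws \<Longrightarrow> Lp X \<and> Lp (inverse X)"
  using good_vs good_Lp Lp_1 by (auto simp: ws_vs)

lemma cg_rho: "\<not> t dvd Suc i \<Longrightarrow> cg (rho (j * t + i)) (rho i)"
proof -
  assume a: "\<not> t dvd Suc i"
  have "\<And>X. X \<in> set ws \<Longrightarrow> cg (FF (j * t + i) X) (FF i X) \<and> Lp (FF (j * t + i) X)"
  proof
    fix X assume X: "X \<in> set ws"
    have d: "\<not> int t dvd (2 * int i + 2)" using den_unit a by simp
    have d2: "\<not> int t dvd (2 * int (j * t + i) + 2)"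
    proof
      assume "int t dvd (2 * int (j * t + i) + 2)"
      moreover have "2 * int (j * t + i) + 2 = (2 * int i + 2) + int t * (2 * int j)" by (simp add: algebra_simps)
      ultimately show False using d by (metis dvd_add_left_iff dvd_triv_left)
    qed
    have e: "int t dvd (2 * int (j * t + i) - 1 - (2 * int i - 1))" "int t dvd (2 * int (j * t + i) + 2 - (2 * int i + 2))"
      by (simp_all add: algebra_simps)
    show "cg (FF (j * t + i) X) (FF i X)"
      unfolding FF_def[of "j*t+i"] using cg_FF[OF _ _ _ e] Lp_ws[OF X] nZ_phi_ws_den[OF X d] by blast
    show "Lp (FF (j * t + i) X)" unfolding FF_def
      using Lp_FF Lp_phi Lp_ws[OF X] nZ_phi_ws_den[OF X d2] by blast
  qed
  hence "cg (prod_list (map (FF (j * t + i)) ws)) (prod_list (map (FF i) ws))" by (rule cg_prod_list)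
  thus ?thesis unfolding rho_def using Lp_zz cg_multL by blast
qed

end

context L begin

definition Nn :: nat where "Nn = (t + 1) div 2"

lemma Nn2: "2 * Nn = t + 1" unfolding Nn_def using t_odd by presburger
lemma Nn_lt: "Nn < t" and Nn_ge: "2 \<le> Nn" and Nn_le: "Nn \<le> t - 1" using Nn2 t_ge3 by auto

lemma phi1_nat: "phi 1 (int k) = 1 - qv ^ k" by (simp add: phi_def)

lemma S_eq: "phi 1 (int (t * u)) = (1 - qv ^ t) * (\<Sum>i<u. (qv ^ t) ^ i)"
  unfolding phi1_nat power_mult by (rule one_diff_power_eq)

lemma nZ_nat: "u \<noteq> 0 \<Longrightarrow> \<not> Zp (of_nat u)"
proof -
  assume "u \<noteq> 0"
  have "(of_nat u :: ratfun5) = to_fract (of_nat u)" by (simp add: of_nat_fract to_fract_def)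
  thus ?thesis using Zp_to_fract not_dvd_nat \<open>u \<noteq> 0\<close> by simp
qed

lemma cg_S: "cg (\<Sum>i<u. (qv ^ t) ^ i) (of_nat u)"
proof -
  have "cg (\<Sum>i<u. (qv ^ t) ^ i) (\<Sum>i<u. 1)"
  proof (rule cg_sum)
    fix i
    have d: "int t dvd int (t * i) - 0" by (simp del: of_nat_mult)
    have "cg (qv powi int (t * i)) (qv powi 0)" using cg_qpowi[OF d] .
    moreover have "(qv ^ t) ^ i = qv powi int (t * i)" by (metis power_mult power_int_of_nat)
    ultimately show "cg ((qv ^ t) ^ i) 1" by simp
  qed
  thus ?thesis by simp
qed

lemma Up_S: "u \<noteq> 0 \<Longrightarrow> Lp (\<Sum>i<u. (qv ^ t) ^ i) \<and> \<not> Zp (\<Sum>i<u. (qv ^ t) ^ i)"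
proof -
  assume u: "u \<noteq> 0"
  have L: "Lp (\<Sum>i<u. (qv ^ t) ^ i)" by (rule Lp_sum) (intro Lp_power Lp_qpow)
  have "\<not> Zp (\<Sum>i<u. (qv ^ t) ^ i)" using cg_Zp[OF cg_S[of u]] nZ_nat[OF u] by blast
  thus ?thesis using L by simp
qed

lemma ratio_Lp: "Lp (phi 1 (int t * (2 * int j + 1)) / phi 1 (int t * (2 * int j + 2)))"
proof -
  have e1: "int t * (2 * int j + 1) = int (t * (2 * j + 1))" and e2: "int t * (2 * int j + 2) = int (t * (2 * j + 2))"
    by (simp_all add: algebra_simps)
  define A where "A = (\<Sum>i<2*j+1. (qv ^ t) ^ i)"
  define B where "B = (\<Sum>i<2*j+2. (qv ^ t) ^ i)"
  have A0: "2 * j + 1 \<noteq> 0" and B0: "2 * j + 2 \<noteq> 0" by simp_all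
  have A: "Lp A" unfolding A_def using Up_S[OF A0] by (rule conjunct1)
  have B: "Lp B" "\<not> Zp B" unfolding B_def using Up_S[OF B0] by auto
  show ?thesis
  proof (cases "1 - qv ^ t = 0")
    case True thus ?thesis unfolding e1 e2 S_eq using Lp_0 by simp
  next
    case False
    hence "phi 1 (int (t * (2 * j + 1))) / phi 1 (int (t * (2 * j + 2))) = A / B"
      unfolding S_eq A_def B_def by simp
    thus ?thesis unfolding e1 e2 divide_inverse using A B Lp_mult Lp_inverse by simp
  qed
qed

lemma rho_expand: "rho i = uu i * phi 1 (2 * int i - 1) * inverse (phi 1 (2 * int i + 2))"
  by (simp add: rho_uu FF1 divide_inverse mult.assoc)

lemma not_dvd_small: "0 < s \<Longrightarrow> s < t \<Longrightarrow> \<not> t dvd (j * t + s)"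
  by (metis dvd_add_right_iff dvd_triv_right nat_dvd_not_less)

lemma Lp_inv_phi1: "\<not> t dvd Suc i \<Longrightarrow> Lp (inverse (phi 1 (2 * int i + 2)))"
  using Lp_inverse Lp_phi1 phi1_Zp den_unit by blast

lemma inner_inv:
  assumes base: "Lp (hh (j * t))"
  shows "r < t \<Longrightarrow> (r \<le> Nn \<longrightarrow> Lp (hh (j * t + r))) \<and>
     (Nn < r \<longrightarrow> (\<exists>y. Lp y \<and> hh (j * t + r) = phi 1 (int t * (2 * int j + 1)) * y))"
proof (induct r)
  case 0 thus ?case using base by simp
next
  case (Suc r)
  have IH: "(r \<le> Nn \<longrightarrow> Lp (hh (j * t + r))) \<and>
     (Nn < r \<longrightarrow> (\<exists>y. Lp y \<and> hh (j * t + r) = phi 1 (int t * (2 * int j + 1)) * y))"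
    using Suc by simp
  have nd: "\<not> t dvd Suc (j * t + r)" using not_dvd_small[of "Suc r" j] Suc.prems by simp
  have hs: "hh (j * t + Suc r) = hh (j * t + r) * rho (j * t + r)" by (simp add: hh_Suc)
  have Lr: "Lp (rho (j * t + r))" using Lp_rho nd by blast
  consider "r < Nn" | "r = Nn" | "Nn < r" by linarith
  thus ?case
  proof cases
    case 1 thus ?thesis using IH hs Lr Lp_mult by auto
  next
    case 2
    define y where "y = hh (j * t + r) * uu (j * t + r) * inverse (phi 1 (2 * int (j * t + r) + 2))"
    have "Lp y" unfolding y_def using IH 2 Lp_mult Lp_uu Lp_inv_phi1[OF nd] by simp
    moreover have "2 * int (j * t + r) - 1 = int t * (2 * int j + 1)" using 2 Nn2
      by (simp add: algebra_simps)
    hence "hh (j * t + Suc r) = phi 1 (int t * (2 * int j + 1)) * y"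
      unfolding hs rho_expand y_def by (simp add: mult_ac)
    ultimately show ?thesis using 2 by auto
  next
    case 3
    then obtain y where y: "Lp y" "hh (j * t + r) = phi 1 (int t * (2 * int j + 1)) * y" using IH by auto
    have "hh (j * t + Suc r) = phi 1 (int t * (2 * int j + 1)) * (y * rho (j * t + r))"
      unfolding hs y(2) by (simp add: mult_ac)
    thus ?thesis using 3 y Lr Lp_mult by auto
  qed
qed

lemma Lp_hh_jt: "Lp (hh (j * t))"
proof (induct j)
  case 0 thus ?case using hh_0 Lp_1 by simp
next
  case (Suc j)
  have tm: "t - 1 < t" using t_pos by simp
  have e: "Suc j * t = Suc (j * t + (t - 1))" using t_pos by (simp add: algebra_simps)
  have hs: "hh (Suc j * t) = hh (j * t + (t - 1)) * rho (j * t + (t - 1))" unfolding e hh_Suc ..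
  have e1: "2 * int (j * t + (t - 1)) + 2 = int t * (2 * int j + 2)" using t_pos by (simp add: algebra_simps of_nat_diff)
  have e2: "2 * int (j * t + (t - 1)) - 1 = int t * (2 * int j + 1) + (int t - 3)" using t_pos by (simp add: algebra_simps of_nat_diff)
  define R where "R = phi 1 (int t * (2 * int j + 1)) / phi 1 (int t * (2 * int j + 2))"
  have LR: "Lp R" unfolding R_def by (rule ratio_Lp)
  show ?case
  proof (cases "t - 1 = Nn")
    case True
    hence t3: "t = 3" using Nn2 t_ge3 by linarith
    have e2': "2 * int (j * t + (t - 1)) - 1 = int t * (2 * int j + 1)" using t3 by (simp add: algebra_simps)
    have "rho (j * t + (t - 1)) = uu (j * t + (t - 1)) * R"
      unfolding rho_expand R_def e1 e2' by (simp add: divide_inverse mult.assoc)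
    moreover have "Lp (hh (j * t + (t - 1)))" using inner_inv[OF Suc tm] True by simp
    ultimately show ?thesis unfolding hs using Lp_mult Lp_uu LR by simp
  next
    case False
    hence "Nn < t - 1" using Nn_le by simp
    then obtain y where y: "Lp y" "hh (j * t + (t - 1)) = phi 1 (int t * (2 * int j + 1)) * y"
      using inner_inv[OF Suc tm] by auto
    have "hh (Suc j * t) = y * uu (j * t + (t - 1)) * phi 1 (2 * int (j * t + (t - 1)) - 1) * R"
      unfolding hs y(2) rho_expand R_def e1 by (simp add: divide_inverse mult_ac)
    thus ?thesis using y Lp_mult Lp_uu Lp_phi1 LR by simp
  qed
qed

lemma Lp_hh_small: "r \<le> t - 1 \<Longrightarrow> Lp (hh r)"
  unfolding hh_def by (rule Lp_prod) (use Lp_rho in \<open>auto simp: nat_dvd_not_less\<close>)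

lemma cg_hh_block: "r \<le> t - 1 \<Longrightarrow> cg (hh (j * t + r)) (hh (j * t) * hh r)"
proof (induct r)
  case 0 thus ?case using hh_0 cg_refl by simp
next
  case (Suc r)
  hence r: "r \<le> t - 1" "Suc r < t" by auto
  have IH: "cg (hh (j * t + r)) (hh (j * t) * hh r)" using Suc r by simp
  have L1: "Lp (hh (j * t) * hh r)" using Lp_hh_jt Lp_hh_small r Lp_mult by blast
  have L2: "Lp (hh (j * t + r))" using cg_Lp[OF cg_sym[OF IH] L1] .
  have nd: "\<not> t dvd Suc r" using r by (simp add: nat_dvd_not_less)
  have c: "cg (rho (j * t + r)) (rho r)" using cg_rho nd by blast
  have Lr: "Lp (rho (j * t + r))" using Lp_rho not_dvd_small[of "Suc r" j] r by simp
  have "cg (hh (j * t + r) * rho (j * t + r)) (hh (j * t) * hh r * rho r)"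
    by (rule cg_mult_Lp[OF IH c L2 Lr])
  thus ?case by (simp add: hh_Suc mult.assoc)
qed

end

lemma qint_phi: "qint m = phi 1 m / phi 1 1" by (simp add: qint_def phi_def)

lemma prod_list_div: "prod_list (map (\<lambda>x. f x / (g x :: 'a::field)) xs) = prod_list (map f xs) / prod_list (map g xs)"
  by (induct xs) simp_all

lemma prod_list_mult: "prod_list (map f xs) * prod_list (map g xs) = prod_list (map (\<lambda>x. f x * (g x :: 'a::comm_monoid_mult)) xs)"
  by (induct xs) (simp_all add: mult_ac)

lemma prod_powi: "(x::'a::field) \<noteq> 0 \<Longrightarrow> (\<Prod>i<(N::nat). x powi f i) = x powi (\<Sum>i<N. f i)"
  by (induct N) (simp_all add: power_int_add)

lemma phi_refl: "X \<noteq> 0 \<Longrightarrow> phi (inverse X) (- m) = - (inverse X * qv powi (- m)) * phi X m"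
proof -
  assume X: "X \<noteq> 0"
  have "qv powi (- m) * qv powi m = 1" using qv_nz' by (simp add: power_int_minus field_simps)
  thus ?thesis using X unfolding phi_def by (simp add: algebra_simps)
qed

context L begin

lemma nZ_phi11: "\<not> Zp (phi 1 1)" using phi1_Zp t_ge3 by (simp add: zdvd_not_zless)

lemma Lp_qint: "Lp (qint m)" unfolding qint_phi using Lp_FF Lp_phi1 nZ_phi11 by blast

lemma cg_qint: "int t dvd (m - m') \<Longrightarrow> cg (qint m) (qint m')"
  unfolding qint_phi by (intro cg_divide cg_phi cg_refl Lp_phi1 nZ_phi11 Lp_1) auto

lemma cc_block: "r \<le> t - 1 \<Longrightarrow> cg (cc (j * t + r)) (hh (j * t) * cc r)"
proof -
  assume r: "r \<le> t - 1"
  have c1: "cg (qint (4 * int (j * t + r) - 1)) (qint (4 * int r - 1))"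
    by (rule cg_qint) (simp add: algebra_simps)
  have c2: "cg (hh (j * t + r)) (hh (j * t) * hh r)" using cg_hh_block r by blast
  have L: "Lp (hh (j * t + r))" using cg_Lp[OF cg_sym[OF c2]] Lp_hh_jt Lp_hh_small r Lp_mult by blast
  have "cg (qint (4 * int (j * t + r) - 1) * hh (j * t + r)) (qint (4 * int r - 1) * (hh (j * t) * hh r))"
    by (rule cg_mult_Lp[OF c1 c2 Lp_qint L])
  thus ?thesis by (simp add: cc_def mult_ac)
qed

lemma Zp_rho_Nn: "Nn < t - 1 \<Longrightarrow> Zp (rho Nn)"
proof -
  assume a: "Nn < t - 1"
  have e1: "2 * int Nn - 1 = int t" using Nn2 by linarith
  have "Zp (phi 1 (2 * int Nn - 1))" unfolding e1 phi1_Zp by simp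
  hence z: "Zp (uu Nn * phi 1 (2 * int Nn - 1))" using Zp_mult Lp_uu by blast
  have nd: "\<not> t dvd Suc Nn"
  proof
    assume "t dvd Suc Nn"
    moreover have "0 < Suc Nn" "Suc Nn < t" using a by auto
    ultimately show False by (simp add: nat_dvd_not_less)
  qed
  show ?thesis unfolding rho_expand using Zp_mult'[OF z Lp_inv_phi1[OF nd]] .
qed

lemma Zp_cc_high: "Nn < r \<Longrightarrow> r \<le> t - 1 \<Longrightarrow> Zp (cc r)"
proof -
  assume r: "Nn < r" "r \<le> t - 1"
  have "Zp (hh r)" unfolding hh_def
  proof (rule Zp_prod[of _ Nn])
    show "Zp (rho Nn)" using Zp_rho_Nn r by simp
    fix i assume "i \<in> {..<r}"
    hence "\<not> t dvd Suc i" using r by (simp add: nat_dvd_not_less)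
    thus "Lp (rho i)" by (rule Lp_rho)
  qed (use r in auto)
  thus ?thesis unfolding cc_def using Zp_mult Lp_qint by blast
qed

lemma sum_split_add: "(\<Sum>k<(a::nat) + b. f k) = (\<Sum>k<a. f k) + (\<Sum>r<b. f (a + r))"
  by (induct b) (simp_all add: add_ac)

end

lemma ws_nz: "X \<in> set ws \<Longrightarrow> X \<noteq> 0"
  using av_nz bv_nz cv_nz dv_nz by (auto simp: ws_def)

lemma refl_ratio: "X \<noteq> 0 \<Longrightarrow> phi X m \<noteq> 0 \<Longrightarrow> phi X m / phi (inverse X) (- m) = - (X * qv powi m)"
proof -
  assume a: "X \<noteq> 0" "phi X m \<noteq> 0"
  have q: "qv powi (- m) = inverse (qv powi m)" by (simp add: power_int_minus)
  have qn: "qv powi m \<noteq> 0" using qv_nz' by simp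
  show ?thesis unfolding phi_refl[OF a(1)] q using a qn by (simp add: field_simps)
qed

lemma pair_alg: "(A::'a::field) \<noteq> 0 \<Longrightarrow> B \<noteq> 0 \<Longrightarrow> X \<noteq> 0 \<Longrightarrow> c2 \<noteq> 0 \<Longrightarrow>
  A / B * ((- (X * (c3 * c2)) * B) / (- (inverse X * c2) * A)) = X ^ 2 * c3"
  by (simp add: field_simps power2_eq_square)

lemma pair_id: "X \<noteq> 0 \<Longrightarrow> phi X (2 * int r - 1) \<noteq> 0 \<Longrightarrow> phi (inverse X) (2 * int r + 2) \<noteq> 0 \<Longrightarrow>
  FF r X * (phi X (- 2 * int r - 2) / phi (inverse X) (1 - 2 * int r)) = X ^ 2 * qv powi (-3)"
proof -
  assume a: "X \<noteq> 0" "phi X (2 * int r - 1) \<noteq> 0" "phi (inverse X) (2 * int r + 2) \<noteq> 0"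
  have m1: "- 2 * int r - 2 = - (2 * int r + 2)" and m2: "1 - 2 * int r = - (2 * int r - 1)" by simp_all
  have iX: "inverse X \<noteq> 0" using a by simp
  have e1: "phi X (- (2 * int r + 2)) = - (X * qv powi (- (2 * int r + 2))) * phi (inverse X) (2 * int r + 2)"
    using phi_refl[OF iX, of "2 * int r + 2"] by simp
  have e2: "phi (inverse X) (- (2 * int r - 1)) = - (inverse X * qv powi (- (2 * int r - 1))) * phi X (2 * int r - 1)"
    using phi_refl[OF a(1), of "2 * int r - 1"] .
  have c: "qv powi (- (2 * int r + 2)) = qv powi (-3) * qv powi (- (2 * int r - 1))"
  proof -
    have "- (2 * int r + 2) = -3 + (- (2 * int r - 1))" by simp
    moreover have "qv powi (-3 + (- (2 * int r - 1))) = qv powi (-3) * qv powi (- (2 * int r - 1))"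
      by (rule power_int_add) (simp add: qv_nz')
    ultimately show ?thesis by metis
  qed
  have cn: "qv powi (- (2 * int r - 1)) \<noteq> 0" using qv_nz' by simp
  show ?thesis unfolding FF_def m1 m2 e1 e2 c by (rule pair_alg) (use a cn in auto)
qed

lemma pc: "zz ^ 2 * prod_list (map (\<lambda>X. X ^ 2 * c) ws) = qv ^ 14 * c ^ 6"
  unfolding ws_def zz_def using av_nz bv_nz cv_nz dv_nz qv_nz'
  by (simp add: field_simps eval_nat_numeral)
lemma hc: "zz * prod_list (map (\<lambda>X. - (X * c)) ws) = qv ^ 7 * c ^ 6"
  unfolding ws_def zz_def using av_nz bv_nz cv_nz dv_nz qv_nz'
  by (simp add: field_simps eval_nat_numeral)
lemma pair_const: "zz ^ 2 * prod_list (map (\<lambda>X. X ^ 2 * qv powi (-3)) ws) = qv powi (-4)"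
proof -
  have "(qv powi (-3)) ^ 6 = qv powi (-3 * int 6)" by (rule power_int_power')
  moreover have "qv ^ 14 = qv powi (int 14)" by (rule power_int_of_nat[symmetric])
  moreover have "qv powi (int 14) * qv powi (-3 * int 6) = qv powi (int 14 + (-3 * int 6))"
    by (rule power_int_add[symmetric]) (simp add: qv_nz')
  ultimately show ?thesis unfolding pc by simp
qed

lemma hN_const: "zz * prod_list (map (\<lambda>X. - (X * qv powi (2 * int i - 1))) ws) = qv powi (12 * int i + 1)"
proof -
  have "zz * prod_list (map (\<lambda>X. - (X * qv powi (2 * int i - 1))) ws) = qv ^ 7 * (qv powi (2 * int i - 1)) ^ 6"
    by (rule hc)
  also have "\<dots> = qv powi 7 * qv powi ((2 * int i - 1) * 6)"
  proof -
    have "(qv powi (2 * int i - 1)) ^ 6 = qv powi ((2 * int i - 1) * int 6)" by (rule power_int_power')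
    moreover have "qv ^ 7 = qv powi (int 7)" by (rule power_int_of_nat[symmetric])
    ultimately show ?thesis by simp
  qed
  also have "\<dots> = qv powi (7 + (2 * int i - 1) * 6)" by (rule power_int_add[symmetric]) (simp add: qv_nz')
  also have "\<dots> = qv powi (12 * int i + 1)" by (simp add: algebra_simps)
  finally show ?thesis .
qed

lemma sum_12: "(\<Sum>i<(N::nat). 12 * int i + 1) = 6 * int N * (int N - 1) + int N"
  by (induct N) (simp_all add: algebra_simps)

context L begin

lemma Nn2i: "2 * int Nn = int t + 1" using Nn2 by (metis of_nat_1 of_nat_add of_nat_mult of_nat_numeral)

lemma int_not_dvd: "m \<noteq> 0 \<Longrightarrow> \<bar>m\<bar> < int t \<Longrightarrow> \<not> int t dvd m"
proof
  assume a: "m \<noteq> 0" "\<bar>m\<bar> < int t" "int t dvd m"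
  have "\<bar>int t\<bar> \<le> \<bar>m\<bar>" by (rule dvd_imp_le_int[OF a(1) a(3)])
  thus False using a(2) by simp
qed

lemma unit_num: "i < Nn \<Longrightarrow> \<not> int t dvd (2 * int i - 1)"
proof -
  assume i: "i < Nn"
  have "2 * int i - 1 \<noteq> 0" by presburger
  moreover have "\<bar>2 * int i - 1\<bar> < int t" using i Nn2i t_ge3 by (cases "i = 0") auto
  ultimately show ?thesis by (rule int_not_dvd)
qed

lemma unit_den: "k < Nn \<Longrightarrow> \<not> int t dvd (2 * int k + 2)"
proof -
  assume k: "k < Nn"
  have e: "2 * int k + 2 = 2 * (int k + 1)" by simp
  have "\<not> int t dvd (int k + 1)" using k Nn_lt by (intro int_not_dvd) auto
  thus ?thesis unfolding e t_dvd_2x .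
qed

lemma unit_den': "r < Nn \<Longrightarrow> \<not> int t dvd (1 - 2 * int r)"
proof -
  assume i: "r < Nn"
  have "1 - 2 * int r \<noteq> 0" by presburger
  moreover have "\<bar>1 - 2 * int r\<bar> < int t" using i Nn2i t_ge3 by (cases "r = 0") auto
  ultimately show ?thesis by (rule int_not_dvd)
qed

lemma Up_phi_ws: "X \<in> set ws \<Longrightarrow> \<not> int t dvd m \<Longrightarrow> Lp (phi X m) \<and> \<not> Zp (phi X m) \<and> Lp (phi (inverse X) m) \<and> \<not> Zp (phi (inverse X) m)"
proof -
  assume a: "X \<in> set ws" "\<not> int t dvd m"
  have "Lp X" "Lp (inverse X)" using Lp_ws[OF a(1)] by auto
  thus ?thesis using nZ_phi_ws_num[OF a] nZ_phi_ws_den[OF a] Lp_phi by simp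
qed

lemma nz_of_nZ: "\<not> Zp x \<Longrightarrow> x \<noteq> 0" using Zp_0 by auto

lemma hN: "cg (hh Nn) (qv powi (-1))"
proof -
  define A where "A i = prod_list (map (\<lambda>X. phi X (2 * int i - 1)) ws)" for i
  define B where "B i = prod_list (map (\<lambda>X. phi (inverse X) (2 * int i + 2)) ws)" for i
  define G where "G i = zz * prod_list (map (\<lambda>X. phi X (2 * int i - 1) / phi (inverse X) (2 * int (Nn - Suc i) + 2)) ws)" for i
  have "hh Nn = (\<Prod>i<Nn. zz * A i / B i)"
    unfolding hh_def rho_def FF_def A_def B_def prod_list_div by simp
  also have "\<dots> = (\<Prod>i<Nn. zz * A i) / (\<Prod>i<Nn. B i)" by (rule prod_dividef)
  also have "(\<Prod>i<Nn. B i) = (\<Prod>i<Nn. B (Nn - Suc i))" by (rule prod.nat_diff_reindex[symmetric])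
  also have "(\<Prod>i<Nn. zz * A i) / (\<Prod>i<Nn. B (Nn - Suc i)) = (\<Prod>i<Nn. zz * A i / B (Nn - Suc i))"
    by (rule prod_dividef[symmetric])
  also have "\<dots> = (\<Prod>i<Nn. G i)" unfolding G_def A_def B_def prod_list_div by simp
  finally have h: "hh Nn = (\<Prod>i<Nn. G i)" .
  have "cg (\<Prod>i<Nn. G i) (\<Prod>i<Nn. zz * prod_list (map (\<lambda>X. - (X * qv powi (2 * int i - 1))) ws))"
  proof (rule cg_prod)
    fix i assume "i \<in> {..<Nn}"
    hence i: "i < Nn" by simp
    have k: "Nn - Suc i < Nn" using i by simp
    have per: "\<And>X. X \<in> set ws \<Longrightarrow> cg (phi X (2 * int i - 1) / phi (inverse X) (2 * int (Nn - Suc i) + 2)) (- (X * qv powi (2 * int i - 1)))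
         \<and> Lp (phi X (2 * int i - 1) / phi (inverse X) (2 * int (Nn - Suc i) + 2))"
    proof -
      fix X assume X: "X \<in> set ws"
      have un: "Lp (phi X (2 * int i - 1))" "\<not> Zp (phi X (2 * int i - 1))" using Up_phi_ws[OF X unit_num[OF i]] by auto
      have ud: "Lp (phi (inverse X) (2 * int (Nn - Suc i) + 2))" "\<not> Zp (phi (inverse X) (2 * int (Nn - Suc i) + 2))"
        using Up_phi_ws[OF X unit_den[OF k]] by auto
      have e: "2 * int (Nn - Suc i) + 2 - (- (2 * int i - 1)) = int t" using i Nn2i by (simp add: of_nat_diff)
      have d: "int t dvd (2 * int (Nn - Suc i) + 2 - (- (2 * int i - 1)))" unfolding e by simp
      have c1: "cg (phi (inverse X) (2 * int (Nn - Suc i) + 2)) (phi (inverse X) (- (2 * int i - 1)))"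
        using cg_phi[OF _ d] Lp_ws[OF X] by blast
      have c2: "cg (phi X (2 * int i - 1) / phi (inverse X) (2 * int (Nn - Suc i) + 2))
                   (phi X (2 * int i - 1) / phi (inverse X) (- (2 * int i - 1)))"
        by (rule cg_divide[OF cg_refl c1 un(1) ud])
      have "phi X (2 * int i - 1) / phi (inverse X) (- (2 * int i - 1)) = - (X * qv powi (2 * int i - 1))"
        by (rule refl_ratio[OF ws_nz[OF X] nz_of_nZ[OF un(2)]])
      thus "cg (phi X (2 * int i - 1) / phi (inverse X) (2 * int (Nn - Suc i) + 2)) (- (X * qv powi (2 * int i - 1)))
         \<and> Lp (phi X (2 * int i - 1) / phi (inverse X) (2 * int (Nn - Suc i) + 2))"
        using c2 Lp_FF[OF un(1) ud] by simp
    qed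
    have c: "cg (prod_list (map (\<lambda>X. phi X (2 * int i - 1) / phi (inverse X) (2 * int (Nn - Suc i) + 2)) ws))
               (prod_list (map (\<lambda>X. - (X * qv powi (2 * int i - 1))) ws))"
      by (rule cg_prod_list) (use per in auto)
    have L: "Lp (prod_list (map (\<lambda>X. phi X (2 * int i - 1) / phi (inverse X) (2 * int (Nn - Suc i) + 2)) ws))"
      by (rule Lp_prod_list) (use per in auto)
    show "cg (G i) (zz * prod_list (map (\<lambda>X. - (X * qv powi (2 * int i - 1))) ws)) \<and> Lp (G i)"
      unfolding G_def using cg_multL[OF c Lp_zz] Lp_mult[OF Lp_zz L] by simp
  qed
  also have "(\<Prod>i<Nn. zz * prod_list (map (\<lambda>X. - (X * qv powi (2 * int i - 1))) ws)) = qv powi (6 * int Nn * (int Nn - 1) + int Nn)"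
    unfolding hN_const prod_powi[OF qv_nz'] sum_12 ..
  finally have c: "cg (hh Nn) (qv powi (6 * int Nn * (int Nn - 1) + int Nn))" unfolding h .
  have "int t dvd (6 * int Nn * (int Nn - 1) + int Nn - (-1))"
  proof -
    have "6 * int Nn * (int Nn - 1) + int Nn - (-1) = int t * (3 * int Nn - 1)"
    proof -
      have ti: "int t = 2 * int Nn - 1" using Nn2i by simp
      show ?thesis unfolding ti by (simp add: algebra_simps)
    qed
    thus ?thesis by simp
  qed
  thus ?thesis using cg_trans[OF c cg_qpowi] by blast
qed

end

context L begin

lemma nZ_rho_low: "k < Nn \<Longrightarrow> \<not> Zp (rho k)"
proof -
  assume k: "k < Nn"
  have a: "Lp (phi 1 (2 * int k - 1))" "\<not> Zp (phi 1 (2 * int k - 1))" using Lp_phi1 phi1_Zp unit_num[OF k] by auto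
  have b: "Lp (phi 1 (2 * int k + 2))" "\<not> Zp (phi 1 (2 * int k + 2))" using Lp_phi1 phi1_Zp unit_den[OF k] by auto
  have bi: "Lp (inverse (phi 1 (2 * int k + 2)))" "\<not> Zp (inverse (phi 1 (2 * int k + 2)))"
    using Lp_inverse[OF b] not_Zp_inverse[OF b] by auto
  have "\<not> Zp (uu k * phi 1 (2 * int k - 1))" using Up_mult[OF Lp_uu nZ_uu a] .
  moreover have "Lp (uu k * phi 1 (2 * int k - 1))" using Lp_mult[OF Lp_uu a(1)] .
  ultimately show ?thesis unfolding rho_expand using Up_mult bi by blast
qed

lemma pair: "r < Nn \<Longrightarrow> cg (rho r * rho (Nn - Suc r)) (qv powi (-4))"
proof -
  assume r: "r < Nn"
  define k where "k = Nn - Suc r"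
  have k: "k < Nn" unfolding k_def using r by simp
  define g where "g X = phi X (- 2 * int r - 2) / phi (inverse X) (1 - 2 * int r)" for X
  have per: "\<And>X. X \<in> set ws \<Longrightarrow> cg (FF k X) (g X) \<and> Lp (FF k X)"
  proof -
    fix X assume X: "X \<in> set ws"
    have u: "Lp (phi X (2 * int k - 1))" "Lp (phi (inverse X) (2 * int k + 2))" "\<not> Zp (phi (inverse X) (2 * int k + 2))"
      using Up_phi_ws[OF X unit_den[OF k]] Up_phi_ws[OF X unit_num[OF k]] by auto
    have e1: "- 2 * int r - 2 - (2 * int k - 1) = - int t" unfolding k_def using r Nn2i by (simp add: of_nat_diff)
    have e2: "1 - 2 * int r - (2 * int k + 2) = - int t" unfolding k_def using r Nn2i by (simp add: of_nat_diff)
    have d1: "int t dvd (- 2 * int r - 2 - (2 * int k - 1))" unfolding e1 by simp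
    have d2: "int t dvd (1 - 2 * int r - (2 * int k + 2))" unfolding e2 by simp
    have "cg (g X) (FF k X)" unfolding g_def
      using cg_FF[OF _ _ u(3) d1 d2] Lp_ws[OF X] by blast
    thus "cg (FF k X) (g X) \<and> Lp (FF k X)" unfolding FF_def using cg_sym Lp_FF[OF u(1) u(2) u(3)] by blast
  qed
  have c: "cg (rho k) (zz * prod_list (map g ws))" unfolding rho_def
    by (rule cg_multL[OF cg_prod_list Lp_zz]) (use per in auto)
  have nr: "\<not> t dvd Suc r" using r Nn_lt by (simp add: nat_dvd_not_less)
  have c2: "cg (rho r * rho k) (rho r * (zz * prod_list (map g ws)))" by (rule cg_multL[OF c Lp_rho[OF nr]])
  have "rho r * (zz * prod_list (map g ws)) = zz ^ 2 * prod_list (map (\<lambda>X. FF r X * g X) ws)"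
    unfolding rho_def power2_eq_square by (simp add: prod_list_mult[symmetric] mult_ac)
  also have "prod_list (map (\<lambda>X. FF r X * g X) ws) = prod_list (map (\<lambda>X. X ^ 2 * qv powi (-3)) ws)"
  proof (rule arg_cong[where f = prod_list], rule map_cong[OF refl])
    fix X assume X: "X \<in> set ws"
    have a: "\<not> Zp (phi X (2 * int r - 1))" "\<not> Zp (phi (inverse X) (2 * int r + 2))"
      using Up_phi_ws[OF X unit_num[OF r]] Up_phi_ws[OF X unit_den[OF r]] by auto
    show "FF r X * g X = X ^ 2 * qv powi (-3)" unfolding g_def
      by (rule pair_id[OF ws_nz[OF X] nz_of_nZ[OF a(1)] nz_of_nZ[OF a(2)]])
  qed
  also have "zz ^ 2 * prod_list (map (\<lambda>X. X ^ 2 * qv powi (-3)) ws) = qv powi (-4)" by (rule pair_const)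
  finally show ?thesis using c2 unfolding k_def by simp
qed

lemma refl_hh: "r \<le> Nn \<Longrightarrow> cg (hh (Nn - r)) (qv powi (4 * int r - 1) * hh r)"
proof (induct r)
  case 0 thus ?case using hN by (simp add: hh_0)
next
  case (Suc r)
  hence r: "r < Nn" by simp
  have IH: "cg (hh (Nn - r)) (qv powi (4 * int r - 1) * hh r)" using Suc by simp
  define k where "k = Nn - Suc r"
  have k: "k < Nn" "Nn - r = Suc k" unfolding k_def using r by auto
  have Lk: "Lp (hh k)" using Lp_hh_small k Nn_lt by simp
  have Lr: "Lp (hh r)" using Lp_hh_small r Nn_lt by simp
  have Lr1: "Lp (hh (Suc r))" using Lp_hh_small r Nn_lt by simp
  have nk: "\<not> t dvd Suc k" using k Nn_lt by (simp add: nat_dvd_not_less)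
  have Lrk: "Lp (rho k)" using Lp_rho[OF nk] .
  have nZk: "\<not> Zp (rho k)" using nZ_rho_low[OF k(1)] .
  define Y where "Y = qv powi (4 * int r + 3) * hh (Suc r)"
  have LY: "Lp Y" unfolding Y_def using Lp_mult Lp_qpowi Lr1 by blast
  have "Y * rho k = (qv powi (4 * int r + 3) * hh r) * (rho r * rho (Nn - Suc r))"
    unfolding Y_def k_def by (simp add: hh_Suc mult_ac)
  moreover have "cg ((qv powi (4 * int r + 3) * hh r) * (rho r * rho (Nn - Suc r))) ((qv powi (4 * int r + 3) * hh r) * qv powi (-4))"
    by (rule cg_multL[OF pair[OF r]]) (use Lp_mult Lp_qpowi Lr in blast)
  moreover have "(qv powi (4 * int r + 3) * hh r) * qv powi (-4) = qv powi (4 * int r - 1) * hh r"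
  proof -
    have "qv powi (4 * int r + 3) * qv powi (-4) = qv powi (4 * int r + 3 + (-4))"
      by (rule power_int_add[symmetric]) (simp add: qv_nz')
    thus ?thesis by (simp add: mult_ac)
  qed
  ultimately have c1: "cg (Y * rho k) (qv powi (4 * int r - 1) * hh r)" by simp
  have "cg (hh k * rho k) (Y * rho k)" using cg_trans[OF IH[unfolded k(2) hh_Suc] cg_sym[OF c1]] .
  hence cY: "cg (hh k) Y" by (rule cg_cancel[OF _ Lk LY Lrk nZk])
  have eq: "qv powi (4 * int (Suc r) - 1) = qv powi (4 * int r + 3)" by (simp add: add.commute)
  show ?case unfolding eq using cY unfolding k_def Y_def .
qed

lemma refl_cc: "r \<le> Nn \<Longrightarrow> cg (cc (Nn - r)) (- cc r)"
proof -
  assume r: "r \<le> Nn"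
  have e: "4 * int (Nn - r) - 1 - (1 - 4 * int r) = 2 * int t" using r Nn2i by (simp add: of_nat_diff)
  have c1: "cg (qint (4 * int (Nn - r) - 1)) (qint (1 - 4 * int r))" by (rule cg_qint) (simp add: e)
  have c2: "cg (hh (Nn - r)) (qv powi (4 * int r - 1) * hh r)" using refl_hh[OF r] .
  have L: "Lp (hh (Nn - r))" using Lp_hh_small Nn_lt by simp
  have c: "cg (cc (Nn - r)) (qint (1 - 4 * int r) * (qv powi (4 * int r - 1) * hh r))"
    unfolding cc_def by (rule cg_mult_Lp[OF c1 c2 Lp_qint L])
  have q: "qint (1 - 4 * int r) = - (qv powi (- (4 * int r - 1))) * qint (4 * int r - 1)"
  proof -
    have "phi 1 (1 - 4 * int r) = - (qv powi (- (4 * int r - 1))) * phi 1 (4 * int r - 1)"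
      using phi_refl[of 1 "4 * int r - 1"] by simp
    thus ?thesis unfolding qint_phi by simp
  qed
  have qq: "qv powi (- (4 * int r - 1)) * qv powi (4 * int r - 1) = 1"
  proof -
    have "qv powi (- (4 * int r - 1)) * qv powi (4 * int r - 1) = qv powi (- (4 * int r - 1) + (4 * int r - 1))"
      by (rule power_int_add[symmetric]) (simp add: qv_nz')
    thus ?thesis by simp
  qed
  have "qint (1 - 4 * int r) * (qv powi (4 * int r - 1) * hh r) =
        - ((qv powi (- (4 * int r - 1)) * qv powi (4 * int r - 1)) * (qint (4 * int r - 1) * hh r))"
    unfolding q by (simp only: mult_ac mult_minus_left)
  also have "\<dots> = - cc r" unfolding qq cc_def by simp
  finally show ?thesis using c by simp
qed

lemma Lp_cc: "r \<le> t - 1 \<Longrightarrow> Lp (cc r)" unfolding cc_def using Lp_mult Lp_qint Lp_hh_small by blast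

lemma low_sum: "Zp (\<Sum>r<Suc Nn. cc r)"
proof -
  define S where "S = (\<Sum>r<Suc Nn. cc r)"
  have "S = (\<Sum>r<Suc Nn. cc (Suc Nn - Suc r))" unfolding S_def by (rule sum.nat_diff_reindex[symmetric])
  also have "\<dots> = (\<Sum>r<Suc Nn. cc (Nn - r))" by simp
  finally have e: "S = (\<Sum>r<Suc Nn. cc (Nn - r))" .
  have c: "cg (\<Sum>r<Suc Nn. cc (Nn - r)) (\<Sum>r<Suc Nn. - cc r)" by (rule cg_sum) (use refl_cc in auto)
  have neg: "(\<Sum>r<Suc Nn. - cc r) = - S" unfolding S_def by (rule sum_negf)
  have "cg S (- S)" using c unfolding e[symmetric] neg .
  hence z: "Zp (S * of_nat 2)" unfolding cg_def by (simp add: algebra_simps)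
  have LS: "Lp S" unfolding S_def by (rule Lp_sum) (use Lp_cc Nn_le in auto)
  show ?thesis using Zp_cancel[OF z LS Lp_of_nat nZ_nat] unfolding S_def by simp
qed

lemma block: "Nn \<le> R \<Longrightarrow> R \<le> t - 1 \<Longrightarrow> Zp (\<Sum>r<Suc R. cc (j * t + r))"
proof -
  assume R: "Nn \<le> R" "R \<le> t - 1"
  have c: "cg (\<Sum>r<Suc R. cc (j * t + r)) (\<Sum>r<Suc R. hh (j * t) * cc r)"
    by (rule cg_sum) (use cc_block R in auto)
  have "(\<Sum>r<Suc R. cc r) = (\<Sum>r\<in>{0..<Suc Nn}. cc r) + (\<Sum>r\<in>{Suc Nn..<Suc R}. cc r)"
    using sum.atLeastLessThan_concat[of 0 "Suc Nn" "Suc R" cc] R by (simp add: atLeast0LessThan)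
  moreover have "Zp (\<Sum>r\<in>{0..<Suc Nn}. cc r)" using low_sum by (simp add: atLeast0LessThan)
  moreover have "Zp (\<Sum>r\<in>{Suc Nn..<Suc R}. cc r)" by (rule Zp_sum) (use Zp_cc_high R in auto)
  ultimately have "Zp (\<Sum>r<Suc R. cc r)" using Zp_add by simp
  hence "Zp (hh (j * t) * (\<Sum>r<Suc R. cc r))" using Zp_mult Lp_hh_jt by blast
  hence "Zp (\<Sum>r<Suc R. hh (j * t) * cc r)" unfolding sum_distrib_left .
  thus ?thesis using cg_Zp[OF cg_sym[OF c]] by blast
qed

lemma total: "Nn \<le> R \<Longrightarrow> R \<le> t - 1 \<Longrightarrow> Zp (\<Sum>k<Suc (J * t + R). cc k)"
proof (induct J arbitrary: R)
  case 0 thus ?case using block[of R 0] by simp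
next
  case (Suc J)
  have e: "Suc (Suc J * t + R) = Suc J * t + Suc R" by simp
  have e2: "Suc J * t = Suc (J * t + (t - 1))" using t_pos by (simp add: algebra_simps)
  have "(\<Sum>k<Suc (Suc J * t + R). cc k) = (\<Sum>k<Suc J * t. cc k) + (\<Sum>r<Suc R. cc (Suc J * t + r))"
    unfolding e by (rule sum_split_add)
  moreover have "Zp (\<Sum>k<Suc J * t. cc k)" unfolding e2 using Suc.hyps[of "t - 1"] Nn_le by simp
  moreover have "Zp (\<Sum>r<Suc R. cc (Suc J * t + r))" using block Suc.prems by blast
  ultimately show ?case by (metis Zp_add)
qed

lemma local_main: "M = (n + 1) div 2 \<or> M = n - 1 \<Longrightarrow> Zp (\<Sum>k=0..M. cc k)"
proof -
  assume M: "M = (n + 1) div 2 \<or> M = n - 1"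
  obtain m where nm: "n = t * m" using t_dvd_n by auto
  have "odd m" using nodd nm by simp
  then obtain s where ms: "m = 2 * s + 1" by (metis oddE)
  have s0: "{0..M} = {..<Suc M}" by auto
  obtain J R where JR: "M = J * t + R" "Nn \<le> R" "R \<le> t - 1"
  proof (cases "M = (n + 1) div 2")
    case True
    have "n + 1 = 2 * (s * t + Nn)" using nm ms Nn2 by (simp add: algebra_simps)
    hence "M = s * t + Nn" using True by simp
    thus ?thesis using that Nn_le by blast
  next
    case False
    hence "M = n - 1" using M by simp
    hence "M = (2 * s) * t + (t - 1)" using nm ms t_pos by (simp add: algebra_simps)
    thus ?thesis using that Nn_le by blast
  qed
  have "Zp (\<Sum>k<Suc M. cc k)" unfolding JR(1) by (rule total[OF JR(2,3)])
  thus ?thesis unfolding s0 .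
qed

end

theorem lemma3p2:
  fixes n M :: nat
  assumes "n > 1" and "odd n" and "M = (n + 1) div 2 \<or> M = n - 1"
  shows "qcong
    (\<Sum>k=0..M. qint (4 * int k - 1) *
       (qpoch (av / qv) (qv^2) k * qpoch (1 / (qv * av)) (qv^2) k * qpoch (1 / (qv * bv)) (qv^2) k
        * qpoch (cv / qv) (qv^2) k * qpoch (dv / qv) (qv^2) k * qpoch (1 / qv) (qv^2) k)
     / (qpoch (qv^2 / av) (qv^2) k * qpoch (av * qv^2) (qv^2) k * qpoch (bv * qv^2) (qv^2) k
        * qpoch (qv^2 / cv) (qv^2) k * qpoch (qv^2 / dv) (qv^2) k * qpoch (qv^2) (qv^2) k)
     * (bv * qv ^ 7 / (cv * dv)) ^ k)
    0 (qintP n)"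
proof -
  define S where "S = (\<Sum>k=0..M. cc k)"
  have SS: "(\<Sum>k=0..M. qint (4 * int k - 1) *
       (qpoch (av / qv) (qv^2) k * qpoch (1 / (qv * av)) (qv^2) k * qpoch (1 / (qv * bv)) (qv^2) k
        * qpoch (cv / qv) (qv^2) k * qpoch (dv / qv) (qv^2) k * qpoch (1 / qv) (qv^2) k)
     / (qpoch (qv^2 / av) (qv^2) k * qpoch (av * qv^2) (qv^2) k * qpoch (bv * qv^2) (qv^2) k
        * qpoch (qv^2 / cv) (qv^2) k * qpoch (qv^2 / dv) (qv^2) k * qpoch (qv^2) (qv^2) k)
     * (bv * qv ^ 7 / (cv * dv)) ^ k) = S"
    unfolding S_def by (rule sum.cong[OF refl summand_eq])
  have loc: "\<exists>a b. \<not> p dvd b \<and> p dvd a \<and> S = Fract a b" if p: "prime p" "p dvd qintP n" for p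
  proof -
    interpret L p n by unfold_locales (use p assms in auto)
    show ?thesis using local_main[OF assms(3)] unfolding S_def Zp_def by blast
  qed
  obtain N0 D0 where nd: "quot_of_fract S = (N0, D0)" by (cases "quot_of_fract S") auto
  have SF: "S = Fract N0 D0" using quot_to_fract_quot_of_fract[of S] nd by (simp add: quot_to_fract_def)
  have cop: "coprime N0 D0" and uf: "unit_factor D0 = 1"
    using quot_of_fract_in_normalized_fracts[of S] nd by (auto simp: normalized_fracts_def)
  have D0: "D0 \<noteq> 0" using uf by auto
  have pr: "\<not> p dvd D0 \<and> p dvd N0" if p: "prime p" "p dvd qintP n" for p
  proof -
    obtain a b where ab: "\<not> p dvd b" "p dvd a" "S = Fract a b" using loc[OF p] by blast
    have b0: "b \<noteq> 0" using ab by auto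
    have "a * D0 = N0 * b" using ab(3) SF b0 D0 by (simp add: eq_fract)
    hence pN: "p dvd N0 * b" using ab(2) by (metis dvd_mult2)
    hence pN0: "p dvd N0" using ab(1) p(1) prime_dvd_mult_iff by blast
    have "\<not> p dvd D0"
    proof
      assume "p dvd D0"
      hence "is_unit p" using pN0 cop coprime_common_divisor by blast
      thus False using p(1) by (simp add: prime_def prime_elem_def)
    qed
    thus ?thesis using pN0 by simp
  qed
  have qn0: "qintP n \<noteq> 0" using coeff_qintP0[of n] assms(1) by auto
  have copD: "coprime D0 (qintP n)"
  proof (rule ccontr)
    assume nc: "\<not> coprime D0 (qintP n)"
    have g0: "gcd D0 (qintP n) \<noteq> 0" using D0 by simp
    have "\<not> is_unit (gcd D0 (qintP n))" using nc is_unit_gcd[of D0 "qintP n"] by blast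
    then obtain p where "p dvd gcd D0 (qintP n)" "prime p" using prime_divisor_exists[OF g0] by blast
    hence "p dvd D0" "p dvd qintP n" "prime p" by auto
    thus False using pr by blast
  qed
  have dvdN: "qintP n dvd N0"
  proof (cases "N0 = 0")
    case True thus ?thesis by simp
  next
    case False
    show ?thesis
    proof (rule multiplicity_le_imp_dvd[OF qn0])
      fix p :: mpoly5 assume p: "prime p"
      show "multiplicity p (qintP n) \<le> multiplicity p N0"
      proof (cases "p dvd qintP n")
        case False thus ?thesis by (simp add: not_dvd_imp_multiplicity_0)
      next
        case True
        interpret L p n by unfold_locales (use p True assms in auto)
        have "multiplicity p (qintP n) \<le> 1"
        proof (rule ccontr)
          assume "\<not> multiplicity p (qintP n) \<le> 1"
          hence "p ^ 2 dvd p ^ multiplicity p (qintP n)" by (intro le_imp_power_dvd) simp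
          hence "p ^ 2 dvd qintP n" using multiplicity_dvd dvd_trans by blast
          thus False using squarefree by (simp add: power2_eq_square)
        qed
        moreover have "0 < multiplicity p N0"
          using pr[OF p True] False p by (simp add: prime_multiplicity_gt_zero_iff)
        ultimately show ?thesis by simp
      qed
    qed
  qed
  show ?thesis unfolding SS qcong_def using D0 SF dvdN copD by auto
qed


end
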